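(* Let $n\le m$, $w\in\mathcal W_m$ and $w^c=c_m(w)\in\mathcal W^c_m$, with $w$ on $[0,K_m)$ and $w^c$ on $[0,q_m)$. Let $S^*$ be a set of $(n,m)$-genetic markers, $g=\prod_{i=n}^{m-1}k_i$ the total number of $(n,m)$-genetic markers and $d=|S^*|/g$. Let $A\subseteq[0,K_m)$ be the set of locations at which an $n$-subword of $w$ with genetic marker in $S^*$ begins, and $A^c\subseteq[0,q_m)$ the set of locations at which an $n$-subword of $w^c$ with genetic marker in $S^*$ begins. Then $$\frac{|A|}{K_m}=\frac{d}{K_n},\qquad \frac{|A^c|}{q_m}=\frac{d}{q_n}\prod_{p=n}^{m-1}\Big(1-\frac1{l_p}\Big),$$ and consequently $\frac{|A^c|}{q_m}=\frac{|A|}{K_m}\prod_{p=n}^{m-1}(1-\frac1{l_p})\frac{K_n}{q_n}$.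
   Context: Fix a circular coefficient sequence $\langle k_n,l_n\rangle$, $K_n=\prod_{i<n}k_i$, $q_0=1,p_0=0$, $q_{n+1}=k_nl_nq_n^2$, $p_{n+1}=p_nq_nk_nl_n+1$; $\mathcal C_n(w_0,\dots,w_{k_n-1})=\prod_{i=0}^{q_n-1}\prod_{j=0}^{k_n-1}(b^{q_n-j_i}w_j^{l_n-1}e^{j_i})$ with $j_i\in[0,q_n)$, $j_i\equiv p_n^{-1}i\pmod{q_n}$. $\langle\mathcal W_n\rangle$ is an odometer-based construction sequence ($\mathcal W_0=\Sigma$, $\mathcal W_{n+1}\subseteq(\mathcal W_n)^{k_n}$, uniquely readable); $c_0=\mathrm{id}$, $c_{n+1}(w_0\cdots w_{k_n-1})=\mathcal C_n(c_n(w_0),\dots,c_n(w_{k_n-1}))$, $\mathcal W_n^c=c_n[\mathcal W_n]$. Genetic markers: in an odometer word $w_0w_1\cdots w_{k_t-1}\in\mathcal W_{t+1}$ the $t$-subword $w_j$ has marker $j$; in a circular word $\mathcal C_t(w_0,\dots,w_{k_t-1})$ each displayed copy of $w_j$ in the power $w_j^{l_t-1}$ is a $t$-subword with marker $j$. An $n$-subword occurrence in an $m$-word lies in a unique chain $u_n\subset u_{n+1}\subset\dots\subset u_m$ with $u_i$ a subword of $u_{i+1}$ of marker $j_i$; its $(n,m)$-genetic marker is $\langle j_n,\dots,j_{m-1}\rangle$, $0\le j_i<k_i$. *)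

theory Defs
  imports Complex_Main
begin

definition circ_coeff_seq :: "(nat \<Rightarrow> nat) \<Rightarrow> (nat \<Rightarrow> nat) \<Rightarrow> bool" where
  "circ_coeff_seq k l \<longleftrightarrow> (\<forall>n. 2 \<le> k n \<and> 1 \<le> l n) \<and> summable (\<lambda>n. 1 / real (l n))"

definition KK :: "(nat \<Rightarrow> nat) \<Rightarrow> nat \<Rightarrow> nat" where
  "KK k n = (\<Prod>i<n. k i)"

fun qq :: "(nat \<Rightarrow> nat) \<Rightarrow> (nat \<Rightarrow> nat) \<Rightarrow> nat \<Rightarrow> nat" where
  "qq k l 0 = 1"
| "qq k l (Suc n) = k n * l n * (qq k l n)^2"

fun pp :: "(nat \<Rightarrow> nat) \<Rightarrow> (nat \<Rightarrow> nat) \<Rightarrow> nat \<Rightarrow> nat" where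
  "pp k l 0 = 0"
| "pp k l (Suc n) = pp k l n * qq k l n * k n * l n + 1"

definition jidx :: "(nat \<Rightarrow> nat) \<Rightarrow> (nat \<Rightarrow> nat) \<Rightarrow> nat \<Rightarrow> nat \<Rightarrow> nat" where
  "jidx k l n i = (THE j. j < qq k l n \<and> (pp k l n * j) mod qq k l n = i mod qq k l n)"

datatype 'a csym = Sym 'a | Bsym | Esym

definition cblock :: "(nat \<Rightarrow> nat) \<Rightarrow> (nat \<Rightarrow> nat) \<Rightarrow> nat \<Rightarrow> 'a csym list list \<Rightarrow> nat \<Rightarrow> nat \<Rightarrow> 'a csym list" where
  "cblock k l n vs i j =
     replicate (qq k l n - jidx k l n i) Bsym @ concat (replicate (l n - 1) (vs ! j))
       @ replicate (jidx k l n i) Esym"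

definition cblocks :: "(nat \<Rightarrow> nat) \<Rightarrow> (nat \<Rightarrow> nat) \<Rightarrow> nat \<Rightarrow> 'a csym list list \<Rightarrow> 'a csym list list" where
  "cblocks k l n vs = concat (map (\<lambda>i. map (\<lambda>j. cblock k l n vs i j) [0..<k n]) [0..<qq k l n])"

definition circ_op :: "(nat \<Rightarrow> nat) \<Rightarrow> (nat \<Rightarrow> nat) \<Rightarrow> nat \<Rightarrow> 'a csym list list \<Rightarrow> 'a csym list" where
  "circ_op k l n vs = concat (cblocks k l n vs)"

definition chunks :: "(nat \<Rightarrow> nat) \<Rightarrow> nat \<Rightarrow> 'a list \<Rightarrow> 'a list list" where
  "chunks k m w = map (\<lambda>j. take (KK k m) (drop (j * KK k m) w)) [0..<k m]"

fun cmap :: "(nat \<Rightarrow> nat) \<Rightarrow> (nat \<Rightarrow> nat) \<Rightarrow> nat \<Rightarrow> 'a list \<Rightarrow> 'a csym list" where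
  "cmap k l 0 w = map Sym w"
| "cmap k l (Suc m) w = circ_op k l m (map (cmap k l m) (chunks k m w))"

definition odometer_construction_seq ::
  "(nat \<Rightarrow> nat) \<Rightarrow> 'a set \<Rightarrow> (nat \<Rightarrow> 'a list set) \<Rightarrow> bool" where
  "odometer_construction_seq k Alph W \<longleftrightarrow>
     finite Alph \<and> W 0 = (\<lambda>a. [a]) ` Alph \<and>
     (\<forall>n. W (Suc n) \<subseteq> {concat ws | ws. length ws = k n \<and> set ws \<subseteq> W n}) \<and>
     (\<forall>n u v x pre suf. u \<in> W n \<longrightarrow> v \<in> W n \<longrightarrow> x \<in> W n \<longrightarrow>
        u @ v = pre @ x @ suf \<longrightarrow> pre = [] \<or> suf = [])"

definition genetic_markers :: "(nat \<Rightarrow> nat) \<Rightarrow> nat \<Rightarrow> nat \<Rightarrow> nat list set" where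
  "genetic_markers k n m = {mk. length mk = m - n \<and> (\<forall>i < m - n. mk ! i < k (n + i))}"

text \<open>odo_occ k W n m w pos mk: an n-subword of the odometer m-word w begins at pos and
  has (n,m)-genetic marker mk = [j_n, ..., j_{m-1}].\<close>
inductive odo_occ :: "(nat \<Rightarrow> nat) \<Rightarrow> (nat \<Rightarrow> 'a list set) \<Rightarrow> nat \<Rightarrow> nat \<Rightarrow> 'a list \<Rightarrow> nat \<Rightarrow> nat list \<Rightarrow> bool"
  for k W n where
  base: "w \<in> W n \<Longrightarrow> odo_occ k W n n w 0 []"
| step: "\<lbrakk> w \<in> W (Suc m); w = concat ws; length ws = k m; set ws \<subseteq> W m; j < k m;
          odo_occ k W n m (ws ! j) pos mk \<rbrakk>
         \<Longrightarrow> odo_occ k W n (Suc m) w (length (concat (take j ws)) + pos) (mk @ [j])"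

text \<open>circ_occ k l W n m w pos mk: an n-subword of the circular m-word c_m(w) begins at pos
  and has (n,m)-genetic marker mk.  In C_m(v_0,...), the copy number t of v_j inside the
  block with index (i,j) is an m-subword with marker j.\<close>
inductive circ_occ :: "(nat \<Rightarrow> nat) \<Rightarrow> (nat \<Rightarrow> nat) \<Rightarrow> (nat \<Rightarrow> 'a list set) \<Rightarrow> nat \<Rightarrow> nat \<Rightarrow> 'a list \<Rightarrow> nat \<Rightarrow> nat list \<Rightarrow> bool"
  for k l W n where
  base: "w \<in> W n \<Longrightarrow> circ_occ k l W n n w 0 []"
| step: "\<lbrakk> w \<in> W (Suc m); w = concat ws; length ws = k m; set ws \<subseteq> W m;
          i < qq k l m; j < k m; t < l m - 1;
          circ_occ k l W n m (ws ! j) pos mk \<rbrakk>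
         \<Longrightarrow> circ_occ k l W n (Suc m) w
               (length (concat (take (i * k m + j) (cblocks k l m (map (cmap k l m) ws))))
                 + (qq k l m - jidx k l m i) + t * length (cmap k l m (ws ! j)) + pos)
               (mk @ [j])"

end

theory Submission
  imports Defs "HOL-Number_Theory.Cong"
begin


lemma qq_pos: "circ_coeff_seq k l \<Longrightarrow> qq k l m > 0"
proof (induction m)
  case 0 then show ?case by simp
next
  case (Suc m)
  hence "k m > 0" "l m > 0" unfolding circ_coeff_seq_def
    by (metis not_numeral_le_zero not_gr0, metis not_one_le_zero not_gr0)
  thus ?case using Suc by simp
qed

lemma KK_pos: "circ_coeff_seq k l \<Longrightarrow> KK k m > 0"
  unfolding KK_def circ_coeff_seq_def by (metis not_numeral_le_zero not_gr0 prod_pos)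

lemma KK_Suc: "KK k (Suc m) = KK k m * k m"
  unfolding KK_def by simp

lemma coprime_pq: "coprime (pp k l m) (qq k l m)"
proof (induction m)
  case 0 then show ?case by simp
next
  case (Suc m)
  define c where "c = qq k l m * k m * l m"
  have pe: "pp k l (Suc m) = pp k l m * c + 1" by (simp add: c_def mult.assoc)
  have qd: "qq k l (Suc m) dvd c * c" by (simp add: c_def power2_eq_square mult_ac)
  have "coprime (pp k l m * c + 1) c"
  proof -
    have "gcd c (pp k l m * c + 1) = gcd c 1" by (rule gcd_add_mult)
    thus ?thesis by (simp add: coprime_iff_gcd_eq_1 gcd.commute mult.commute)
  qed
  hence "coprime (pp k l m * c + 1) (c * c)" by simp
  thus ?case using pe qd coprime_divisors dvd_refl by metis
qed

lemma jidx_prop: assumes "circ_coeff_seq k l"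
  shows "jidx k l m i < qq k l m \<and> (pp k l m * jidx k l m i) mod qq k l m = i mod qq k l m"
proof -
  let ?p = "pp k l m" and ?q = "qq k l m"
  obtain x where x: "[?p * x = Suc 0] (mod ?q)" using cong_solve_coprime_nat coprime_pq by blast
  have q0: "?q > 0" using qq_pos assms by blast
  define j where "j = (x * i) mod ?q"
  have "[?p * j = ?p * (x * i)] (mod ?q)" unfolding j_def
    by (simp add: cong_def mod_mult_right_eq)
  moreover have "[?p * (x*i) = 1 * i] (mod ?q)"
    using x by (metis cong_scalar_right mult.assoc One_nat_def)
  ultimately have "[?p * j = i] (mod ?q)" by (metis cong_trans mult_1)
  hence ex: "j < ?q \<and> (?p * j) mod ?q = i mod ?q" using q0 by (simp add: j_def cong_def)
  have un: "\<And>y. y < ?q \<and> (?p * y) mod ?q = i mod ?q \<Longrightarrow> y = j"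
  proof -
    fix y assume y: "y < ?q \<and> (?p * y) mod ?q = i mod ?q"
    hence "[?p * y = ?p * j] (mod ?q)" using ex by (simp add: cong_def)
    hence "[y = j] (mod ?q)" using cong_mult_lcancel_nat coprime_pq by blast
    thus "y = j" using y ex cong_less_modulus_unique_nat by blast
  qed
  have "jidx k l m i = j" unfolding jidx_def using ex un by (rule the_equality)
  thus ?thesis using ex by simp
qed

lemma jidx_less: "circ_coeff_seq k l \<Longrightarrow> jidx k l m i < qq k l m"
  using jidx_prop by blast

lemma len_concat_const: "(\<forall>x\<in>set ws. length x = K) \<Longrightarrow> length (concat ws) = length ws * K"
  by (induction ws) auto

lemma take_concat_const: "(\<forall>x\<in>set ws. length x = K) \<Longrightarrow> j < length ws \<Longrightarrow>
   take K (drop (j * K) (concat ws)) = ws ! j"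
proof (induction ws arbitrary: j)
  case Nil then show ?case by simp
next
  case (Cons a ws)
  show ?case
  proof (cases j)
    case 0 then show ?thesis using Cons by simp
  next
    case (Suc j')
    have la: "length a = K" using Cons.prems by simp
    have "drop (j*K) (concat (a#ws)) = drop (j'*K) (concat ws)" using la Suc by simp
    thus ?thesis using Cons Suc by simp
  qed
qed

lemma W_len: assumes "odometer_construction_seq k Alph W"
  shows "w \<in> W m \<Longrightarrow> length w = KK k m"
proof (induction m arbitrary: w)
  case 0 then show ?case using assms by (auto simp: odometer_construction_seq_def KK_def)
next
  case (Suc m)
  then obtain ws where "w = concat ws" "length ws = k m" "set ws \<subseteq> W m"
    using assms unfolding odometer_construction_seq_def by blast
  moreover have "\<forall>x\<in>set ws. length x = KK k m" using Suc calculation by blast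
  ultimately show ?case using len_concat_const[of ws "KK k m"] by (simp add: KK_Suc mult.commute)
qed

lemma chunks_eq: assumes "odometer_construction_seq k Alph W"
  and "w = concat ws" "length ws = k m" "set ws \<subseteq> W m"
  shows "ws = chunks k m w"
proof (rule nth_equalityI)
  show "length ws = length (chunks k m w)" using assms by (simp add: chunks_def)
  fix j assume "j < length ws"
  moreover have "\<forall>x\<in>set ws. length x = KK k m" using assms W_len[OF assms(1)] by blast
  ultimately show "ws ! j = chunks k m w ! j" using assms
    by (simp add: chunks_def take_concat_const)
qed

lemma chunks_W: assumes "odometer_construction_seq k Alph W" "w \<in> W (Suc m)"
  shows "w = concat (chunks k m w) \<and> length (chunks k m w) = k m \<and> set (chunks k m w) \<subseteq> W m"
proof -
  obtain ws where "w = concat ws" "length ws = k m" "set ws \<subseteq> W m"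
    using assms unfolding odometer_construction_seq_def by blast
  thus ?thesis using chunks_eq[OF assms(1)] by metis
qed




lemma divmod_uniq: fixes L :: nat
  assumes "r < L" "r' < L" "a*L + r = a'*L + r'" shows "a = a' \<and> r = r'"
proof -
  have "(a*L + r) div L = a" using assms(1) by simp
  moreover have "(a'*L + r') div L = a'" using assms(2) by simp
  ultimately have "a = a'" using assms(3) by simp
  thus ?thesis using assms(3) by simp
qed

lemma markers_finite: "finite (genetic_markers k n m)"
proof -
  have "genetic_markers k n m \<subseteq> {xs. set xs \<subseteq> {..<(\<Sum>i<m. k i)} \<and> length xs = m - n}"
  proof
    fix xs assume xs: "xs \<in> genetic_markers k n m"
    { fix x assume "x \<in> set xs"
      then obtain i where i: "i < length xs" "x = xs ! i" by (metis in_set_conv_nth)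
      hence "x < k (n+i)" using xs unfolding genetic_markers_def by auto
      moreover have "k (n+i) \<le> (\<Sum>i<m. k i)"
        using i xs unfolding genetic_markers_def by (intro member_le_sum) auto
      ultimately have "x < (\<Sum>i<m. k i)" by simp }
    thus "xs \<in> {xs. set xs \<subseteq> {..<(\<Sum>i<m. k i)} \<and> length xs = m - n}"
      using xs unfolding genetic_markers_def by auto
  qed
  thus ?thesis using finite_lists_length_eq[of "{..<(\<Sum>i<m. k i)}" "m - n"] finite_subset by blast
qed

lemma markers_split_sub: "S \<subseteq> genetic_markers k n (Suc m) \<Longrightarrow> n \<le> m \<Longrightarrow>
   {x. x @ [j] \<in> S} \<subseteq> genetic_markers k n m"
  unfolding genetic_markers_def
proof safe
  fix x assume S: "S \<subseteq> {mk. length mk = Suc m - n \<and> (\<forall>i<Suc m - n. mk ! i < k (n + i))}"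
    and nm: "n \<le> m" and x: "x @ [j] \<in> S"
  have l: "length x = m - n" using S x nm by auto
  thus "length x = m - n" .
  fix i assume "i < m - n"
  thus "x ! i < k (n+i)" using S x l by (auto simp: nth_append dest!: subsetD spec[of _ i])
qed

lemma markers_split_card: assumes "S \<subseteq> genetic_markers k n (Suc m)" "n \<le> m"
  shows "card S = (\<Sum>j<k m. card {x. x @ [j] \<in> S})"
proof -
  have fS: "finite S" using assms markers_finite finite_subset by blast
  let ?D = "SIGMA j:{..<k m}. {x. x @ [j] \<in> S}"
  have fin: "\<forall>j\<in>{..<k m}. finite {x. x @ [j] \<in> S}"
  proof
    fix j
    have "{x. x @ [j] \<in> S} \<subseteq> butlast ` S" by (force)
    thus "finite {x. x @ [j] \<in> S}" using fS finite_subset by blast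
  qed
  have "bij_betw (\<lambda>(j,x). x @ [j]) ?D S"
  proof (rule bij_betw_imageI)
    show "inj_on (\<lambda>(j, x). x @ [j]) ?D" by (auto simp: inj_on_def)
    show "(\<lambda>(j, x). x @ [j]) ` ?D = S"
    proof safe
      fix mk assume mk: "mk \<in> S"
      hence len: "length mk = Suc m - n" and lt: "\<forall>i<Suc m - n. mk ! i < k (n+i)"
        using assms unfolding genetic_markers_def by auto
      hence ne: "mk \<noteq> []" using assms by auto
      have e: "mk = butlast mk @ [last mk]" using ne by simp
      have "last mk = mk ! (m - n)" using ne len assms by (simp add: last_conv_nth)
      moreover have "m - n < Suc m - n" using assms by simp
      hence "mk ! (m - n) < k (n + (m - n))" using lt by blast
      ultimately have "last mk < k m" using assms by simp
      hence "(last mk, butlast mk) \<in> ?D" using e mk by auto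
      thus "mk \<in> (\<lambda>(j, x). x @ [j]) ` ?D" using e by force
    qed
  qed
  hence "card S = card ?D" by (simp add: bij_betw_same_card)
  also have "\<dots> = (\<Sum>j<k m. card {x. x @ [j] \<in> S})" using fin by simp
  finally show ?thesis .
qed

lemma markers_base: "genetic_markers k n n = {[]}"
  unfolding genetic_markers_def by auto

lemma odo_ge: "odo_occ k W n m w pos mk \<Longrightarrow> n \<le> m \<and> w \<in> W m"
  by (induction rule: odo_occ.induct) auto

lemma odo_base: assumes "odo_occ k W n n w pos mk" shows "pos = 0 \<and> mk = []"
  using assms by (cases rule: odo_occ.cases) (auto dest: odo_ge)

lemma odo_bound: assumes "circ_coeff_seq k l" "odometer_construction_seq k Alph W"
  shows "odo_occ k W n m w pos mk \<Longrightarrow> pos < KK k m"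
proof (induction rule: odo_occ.induct)
  case (base w) then show ?case using KK_pos[OF assms(1)] by blast
next
  case (step w m ws j pos mk)
  have "\<forall>x\<in>set (take j ws). length x = KK k m" using step W_len[OF assms(2)]
    by (meson in_set_takeD subsetD)
  moreover have "length (take j ws) = j" using step by simp
  ultimately have "length (concat (take j ws)) = j * KK k m" using len_concat_const[of "take j ws" "KK k m"] by simp
  hence "length (concat (take j ws)) + pos < (Suc j) * KK k m" using step by simp
  also have "\<dots> \<le> k m * KK k m" using step by (intro mult_le_mono1) simp
  finally show ?case by (simp add: KK_Suc mult.commute)
qed

lemma odo_step_iff: assumes "odometer_construction_seq k Alph W" "w \<in> W (Suc m)" "n \<le> m"
  shows "odo_occ k W n (Suc m) w P mk \<longleftrightarrow>
    (\<exists>j p mk'. j < k m \<and> mk = mk' @ [j] \<and> P = j * KK k m + p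
       \<and> odo_occ k W n m (chunks k m w ! j) p mk')"
proof
  assume "odo_occ k W n (Suc m) w P mk"
  thus "\<exists>j p mk'. j < k m \<and> mk = mk' @ [j] \<and> P = j * KK k m + p
       \<and> odo_occ k W n m (chunks k m w ! j) p mk'"
  proof (cases rule: odo_occ.cases)
    case base thus ?thesis using assms by simp
  next
    case (step ws j pos mk')
    have ws: "chunks k m w = ws" using chunks_eq[OF assms(1) step(4,5,6)] by simp
    have "\<forall>x\<in>set (take j ws). length x = KK k m" using step W_len[OF assms(1)]
      by (meson in_set_takeD subsetD)
    moreover have "length (take j ws) = j" using step(5,7) by simp
    ultimately have L: "length (concat (take j ws)) = j * KK k m" using len_concat_const[of "take j ws" "KK k m"] by simp
    have o: "odo_occ k W n m (chunks k m w ! j) pos mk'" using step(8) ws by simp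
    show ?thesis
      by (rule exI[of _ j], rule exI[of _ pos], rule exI[of _ mk']) (simp add: step(1,2,7) L o)
  qed
next
  assume "\<exists>j p mk'. j < k m \<and> mk = mk' @ [j] \<and> P = j * KK k m + p
       \<and> odo_occ k W n m (chunks k m w ! j) p mk'"
  then obtain j p mk' where h: "j < k m" "mk = mk' @ [j]" "P = j * KK k m + p"
     "odo_occ k W n m (chunks k m w ! j) p mk'" by blast
  define ws where "ws = chunks k m w"
  have c: "w = concat ws" "length ws = k m" "set ws \<subseteq> W m"
    using chunks_W[OF assms(1,2)] ws_def by auto
  have "\<forall>x\<in>set (take j ws). length x = KK k m" using c W_len[OF assms(1)]
    by (meson in_set_takeD subsetD)
  moreover have "length (take j ws) = j" using c h by simp
  ultimately have "length (concat (take j ws)) = j * KK k m" using len_concat_const[of "take j ws" "KK k m"] by simp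
  moreover have "odo_occ k W n (Suc m) w (length (concat (take j ws)) + p) (mk' @ [j])"
    by (rule odo_occ.step[where ws=ws, OF assms(2) c h(1) h(4)[folded ws_def]])
  ultimately show "odo_occ k W n (Suc m) w P mk" using h by simp
qed

lemma odo_count: assumes "circ_coeff_seq k l" "odometer_construction_seq k Alph W" "n \<le> m"
  shows "\<forall>w\<in>W m. \<forall>S. S \<subseteq> genetic_markers k n m \<longrightarrow>
    card {pos. \<exists>mk\<in>S. odo_occ k W n m w pos mk} = card S"
  using assms(3)
proof (induction m rule: dec_induct)
  case base
  show ?case
  proof (intro ballI allI impI)
    fix w S assume w: "w \<in> W n" and S: "S \<subseteq> genetic_markers k n n"
    have "{pos. \<exists>mk\<in>S. odo_occ k W n n w pos mk} = (if [] \<in> S then {0} else {})"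
      using w by (auto dest: odo_base intro: odo_occ.base)
    moreover have "S = (if [] \<in> S then {[]} else {})" using S markers_base by auto
    ultimately show "card {pos. \<exists>mk\<in>S. odo_occ k W n n w pos mk} = card S"
      by (cases "[] \<in> S") auto
  qed
next
  case (step m)
  show ?case
  proof (intro ballI allI impI)
    fix w S assume w: "w \<in> W (Suc m)" and S: "S \<subseteq> genetic_markers k n (Suc m)"
    define Sj where "Sj j = {x. x @ [j] \<in> S}" for j
    define Pj where "Pj j = {pos. \<exists>mk\<in>Sj j. odo_occ k W n m (chunks k m w ! j) pos mk}" for j
    let ?D = "SIGMA j:{..<k m}. Pj j"
    let ?F = "\<lambda>(j,p). j * KK k m + p"
    have cw: "w = concat (chunks k m w) \<and> length (chunks k m w) = k m \<and> set (chunks k m w) \<subseteq> W m"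
      using chunks_W[OF assms(2) w] .
    have inW: "j < k m \<Longrightarrow> chunks k m w ! j \<in> W m" for j using cw by auto
    have Pjc: "j < k m \<Longrightarrow> card (Pj j) = card (Sj j)" for j
      using step.IH inW markers_split_sub[OF S step.hyps(1)] unfolding Pj_def Sj_def by blast
    have Pjb: "p \<in> Pj j \<Longrightarrow> p < KK k m" for p j
      unfolding Pj_def using odo_bound[OF assms(1,2)] by blast
    have Pjf: "finite (Pj j)" for j
      using Pjb by (meson finite_lessThan finite_subset lessThan_iff subsetI)
    have eq: "{pos. \<exists>mk\<in>S. odo_occ k W n (Suc m) w pos mk} = ?F ` ?D"
    proof (rule set_eqI, rule iffI)
      fix pos :: nat assume "pos \<in> {pos. \<exists>mk\<in>S. odo_occ k W n (Suc m) w pos mk}"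
      then obtain mk where "mk \<in> S" "odo_occ k W n (Suc m) w pos mk" by blast
      then obtain j p mk' where h: "j < k m" "mk = mk' @ [j]" "pos = j * KK k m + p"
        "odo_occ k W n m (chunks k m w ! j) p mk'"
        using odo_step_iff[OF assms(2) w step.hyps(1)] by blast
      hence "(j,p) \<in> ?D" using \<open>mk \<in> S\<close> unfolding Pj_def Sj_def by auto
      thus "pos \<in> ?F ` ?D" using h by force
    next
      fix x assume "x \<in> ?F ` ?D"
      then obtain j p where jp: "(j,p) \<in> ?D" "x = j * KK k m + p" by auto
      then obtain mk' where h: "j < k m" "mk' @ [j] \<in> S" "odo_occ k W n m (chunks k m w ! j) p mk'"
        unfolding Pj_def Sj_def by auto
      hence "odo_occ k W n (Suc m) w x (mk' @ [j])"
        by (subst odo_step_iff[OF assms(2) w step.hyps(1)]) (use jp(2) in blast)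
      thus "x \<in> {pos. \<exists>mk\<in>S. odo_occ k W n (Suc m) w pos mk}" using h by auto
    qed
    have inj: "inj_on ?F ?D"
    proof (rule inj_onI)
      fix x y assume xy: "x \<in> ?D" "y \<in> ?D" "?F x = ?F y"
      obtain j p where x: "x = (j,p)" by fastforce
      obtain j' p' where y: "y = (j',p')" by fastforce
      have "p < KK k m" "p' < KK k m" using xy x y Pjb by auto
      moreover have "j * KK k m + p = j' * KK k m + p'" using xy(3) x y by simp
      ultimately show "x = y" using divmod_uniq x y by blast
    qed
    have "card (?F ` ?D) = card ?D" using inj by (rule card_image)
    also have "\<dots> = (\<Sum>j<k m. card (Pj j))" using Pjf by simp
    also have "\<dots> = (\<Sum>j<k m. card (Sj j))" using Pjc by simp
    also have "\<dots> = card S" using markers_split_card[OF S step.hyps(1)] unfolding Sj_def by simp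
    finally show "card {pos. \<exists>mk\<in>S. odo_occ k W n (Suc m) w pos mk} = card S" using eq by simp
  qed
qed




definition offs :: "(nat \<Rightarrow> nat) \<Rightarrow> (nat \<Rightarrow> nat) \<Rightarrow> nat \<Rightarrow> nat \<Rightarrow> nat \<Rightarrow> nat \<Rightarrow> nat" where
  "offs k l m i j t = (i * k m + j) * (l m * qq k l m) + (qq k l m - jidx k l m i) + t * qq k l m"

lemma l_pos: "circ_coeff_seq k l \<Longrightarrow> l m \<ge> 1"
  unfolding circ_coeff_seq_def by blast

lemma k_pos: "circ_coeff_seq k l \<Longrightarrow> k m \<ge> 2"
  unfolding circ_coeff_seq_def by blast

lemma r_bound: assumes "circ_coeff_seq k l" "t < l m - 1" "p < qq k l m"
  shows "(qq k l m - jidx k l m i) + t * qq k l m + p < l m * qq k l m"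
proof -
  have "t + 2 \<le> l m" using assms(2) by simp
  hence "(t+2) * qq k l m \<le> l m * qq k l m" by (rule mult_le_mono1)
  thus ?thesis using assms(3) by (simp add: algebra_simps)
qed

lemma offs_split: "offs k l m i j t + p = (i * k m + j) * (l m * qq k l m) + ((qq k l m - jidx k l m i) + t * qq k l m + p)"
  unfolding offs_def by simp

lemma offs_inj: assumes "circ_coeff_seq k l" "i < qq k l m" "i' < qq k l m" "j < k m" "j' < k m"
  "t < l m - 1" "t' < l m - 1" "p < qq k l m" "p' < qq k l m"
  "offs k l m i j t + p = offs k l m i' j' t' + p'"
  shows "i = i' \<and> j = j' \<and> t = t' \<and> p = p'"
proof -
  have e1: "i * k m + j = i' * k m + j' \<and>
    (qq k l m - jidx k l m i) + t * qq k l m + p = (qq k l m - jidx k l m i') + t' * qq k l m + p'"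
    using divmod_uniq[OF r_bound[OF assms(1,6,8)] r_bound[OF assms(1,7,9)]] assms(10)
    unfolding offs_split by blast
  hence ij: "i = i' \<and> j = j'" using divmod_uniq assms(4,5) by blast
  hence "t * qq k l m + p = t' * qq k l m + p'" using e1 by simp
  hence "t = t' \<and> p = p'" using divmod_uniq assms(8,9) by blast
  thus ?thesis using ij by blast
qed

lemma offs_bound: assumes "circ_coeff_seq k l" "i < qq k l m" "j < k m" "t < l m - 1" "p < qq k l m"
  shows "offs k l m i j t + p < qq k l (Suc m)"
proof -
  let ?L = "l m * qq k l m"
  have "offs k l m i j t + p < (i * k m + j) * ?L + ?L"
    unfolding offs_split using r_bound[OF assms(1,4,5)] by simp
  also have "\<dots> = (i * k m + j + 1) * ?L" by simp
  also have "\<dots> \<le> (qq k l m * k m) * ?L"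
  proof (rule mult_le_mono1)
    have "Suc i * k m \<le> qq k l m * k m" using assms(2) by (intro mult_le_mono1) simp
    thus "i * k m + j + 1 \<le> qq k l m * k m" using assms(3) by simp
  qed
  also have "\<dots> = qq k l (Suc m)" by (simp add: power2_eq_square mult_ac)
  finally show ?thesis .
qed

lemma cblock_len: assumes "circ_coeff_seq k l" "length (vs ! j) = qq k l m"
  shows "length (cblock k l m vs i j) = l m * qq k l m"
proof -
  have J: "jidx k l m i < qq k l m" using jidx_less[OF assms(1)] .
  have "length (concat (replicate (l m - 1) (vs ! j))) = (l m - 1) * qq k l m"
    using len_concat_const[of "replicate (l m - 1) (vs ! j)" "qq k l m"] assms(2) by simp
  hence "length (cblock k l m vs i j) = (qq k l m - jidx k l m i) + (l m - 1) * qq k l m + jidx k l m i"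
    unfolding cblock_def by simp
  also have "\<dots> = qq k l m + (l m - 1) * qq k l m" using J by simp
  also have "\<dots> = l m * qq k l m" using l_pos[OF assms(1), of m]
    by (metis Suc_diff_1 less_le_trans mult_Suc zero_less_one)
  finally show ?thesis .
qed

lemma cblocks_props: assumes "circ_coeff_seq k l" "\<forall>v\<in>set vs. length v = qq k l m" "length vs = k m"
  shows "length (cblocks k l m vs) = qq k l m * k m \<and>
    (\<forall>b\<in>set (cblocks k l m vs). length b = l m * qq k l m)"
proof
  have "\<forall>x\<in>set (map (\<lambda>i. map (\<lambda>j. cblock k l m vs i j) [0..<k m]) [0..<qq k l m]). length x = k m"
    by simp
  thus "length (cblocks k l m vs) = qq k l m * k m"
    unfolding cblocks_def using len_concat_const by fastforce
  show "\<forall>b\<in>set (cblocks k l m vs). length b = l m * qq k l m"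
  proof
    fix b assume "b \<in> set (cblocks k l m vs)"
    then obtain i j where "j < k m" "b = cblock k l m vs i j" unfolding cblocks_def by auto
    moreover hence "length (vs ! j) = qq k l m" using assms by simp
    ultimately show "length b = l m * qq k l m" using cblock_len[OF assms(1)] by simp
  qed
qed

lemma off_len: assumes "circ_coeff_seq k l" "\<forall>v\<in>set vs. length v = qq k l m" "length vs = k m"
  "i < qq k l m" "j < k m"
  shows "length (concat (take (i * k m + j) (cblocks k l m vs))) = (i * k m + j) * (l m * qq k l m)"
proof -
  note cp = cblocks_props[OF assms(1,2,3)]
  have "i * k m + j < qq k l m * k m"
  proof -
    have "Suc i * k m \<le> qq k l m * k m" using assms(4) by (intro mult_le_mono1) simp
    thus ?thesis using assms(5) by simp
  qed
  hence "length (take (i * k m + j) (cblocks k l m vs)) = i * k m + j" using cp by simp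
  moreover have "\<forall>b\<in>set (take (i * k m + j) (cblocks k l m vs)). length b = l m * qq k l m"
    using cp by (meson in_set_takeD)
  ultimately show ?thesis using len_concat_const by metis
qed

lemma chunk_len: assumes "length w = K * c" "j < c"
  shows "length (take K (drop (j * K) w)) = K"
proof -
  have "Suc j * K \<le> c * K" using assms(2) by (intro mult_le_mono1) simp
  thus ?thesis using assms(1) by (simp add: mult.commute)
qed

lemma cmap_len: assumes "circ_coeff_seq k l"
  shows "length w = KK k m \<Longrightarrow> length (cmap k l m w) = qq k l m"
proof (induction m arbitrary: w)
  case 0 then show ?case by (simp add: KK_def)
next
  case (Suc m)
  let ?vs = "map (cmap k l m) (chunks k m w)"
  have lw: "length w = KK k m * k m" using Suc.prems by (simp add: KK_Suc)
  have "\<forall>v\<in>set (chunks k m w). length v = KK k m"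
    unfolding chunks_def using chunk_len[OF lw] by auto
  hence vl: "\<forall>v\<in>set ?vs. length v = qq k l m" using Suc.IH by auto
  have vn: "length ?vs = k m" by (simp add: chunks_def)
  note cp = cblocks_props[OF assms vl vn]
  have "length (cmap k l (Suc m) w) = length (concat (cblocks k l m ?vs))"
    by (simp add: circ_op_def)
  also have "\<dots> = (qq k l m * k m) * (l m * qq k l m)" using cp len_concat_const by metis
  also have "\<dots> = qq k l (Suc m)" by (simp add: power2_eq_square mult_ac)
  finally show ?case .
qed

lemma circ_ge: "circ_occ k l W n m w pos mk \<Longrightarrow> n \<le> m \<and> w \<in> W m"
  by (induction rule: circ_occ.induct) auto

lemma circ_base: assumes "circ_occ k l W n n w pos mk" shows "pos = 0 \<and> mk = []"
  using assms by (cases rule: circ_occ.cases) (auto dest: circ_ge)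

lemma vs_len: assumes "circ_coeff_seq k l" "odometer_construction_seq k Alph W" "set ws \<subseteq> W m"
  shows "\<forall>v\<in>set (map (cmap k l m) ws). length v = qq k l m"
  using assms(3) by (auto intro!: cmap_len[OF assms(1)] W_len[OF assms(2)])

lemma circ_step_val: assumes "circ_coeff_seq k l" "odometer_construction_seq k Alph W"
  "length ws = k m" "set ws \<subseteq> W m" "i < qq k l m" "j < k m"
  shows "length (concat (take (i * k m + j) (cblocks k l m (map (cmap k l m) ws))))
                 + (qq k l m - jidx k l m i) + t * length (cmap k l m (ws ! j)) + pos
         = offs k l m i j t + pos"
proof -
  have "ws ! j \<in> W m" using assms(3,4,6) by auto
  hence "length (cmap k l m (ws ! j)) = qq k l m"
    using W_len[OF assms(2)] cmap_len[OF assms(1)] by blast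
  moreover have "length (concat (take (i * k m + j) (cblocks k l m (map (cmap k l m) ws))))
     = (i * k m + j) * (l m * qq k l m)"
    using off_len[OF assms(1) vs_len[OF assms(1,2,4)]] assms(3,5,6) by simp
  ultimately show ?thesis unfolding offs_def by simp
qed




lemma circ_bound: assumes "circ_coeff_seq k l" "odometer_construction_seq k Alph W"
  shows "circ_occ k l W n m w pos mk \<Longrightarrow> pos < qq k l m"
proof (induction rule: circ_occ.induct)
  case (base w) then show ?case using qq_pos[OF assms(1)] by blast
next
  case (step w m ws i j t pos mk)
  show ?case unfolding circ_step_val[OF assms step(3,4,5,6)]
    using offs_bound[OF assms(1) step(5,6,7) step.IH] .
qed

lemma circ_step_iff: assumes "circ_coeff_seq k l" "odometer_construction_seq k Alph W"
  "w \<in> W (Suc m)" "n \<le> m"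
  shows "circ_occ k l W n (Suc m) w P mk \<longleftrightarrow>
    (\<exists>i j t p mk'. i < qq k l m \<and> j < k m \<and> t < l m - 1 \<and> mk = mk' @ [j]
       \<and> P = offs k l m i j t + p \<and> circ_occ k l W n m (chunks k m w ! j) p mk')"
proof
  assume "circ_occ k l W n (Suc m) w P mk"
  thus "\<exists>i j t p mk'. i < qq k l m \<and> j < k m \<and> t < l m - 1 \<and> mk = mk' @ [j]
       \<and> P = offs k l m i j t + p \<and> circ_occ k l W n m (chunks k m w ! j) p mk'"
  proof (cases rule: circ_occ.cases)
    case base thus ?thesis using assms by simp
  next
    case (step ws i j t pos mk')
    have ws: "chunks k m w = ws" using chunks_eq[OF assms(2) step(4,5,6)] by simp
    have V: "P = offs k l m i j t + pos" using step(1) circ_step_val[OF assms(1,2) step(5,6,7,8)] by simp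
    have o: "circ_occ k l W n m (chunks k m w ! j) pos mk'" using step(10) ws by simp
    have "i < qq k l m \<and> j < k m \<and> t < l m - 1 \<and> mk = mk' @ [j]
       \<and> P = offs k l m i j t + pos \<and> circ_occ k l W n m (chunks k m w ! j) pos mk'"
      using step(2,7,8,9) V o by blast
    thus ?thesis by blast
  qed
next
  assume "\<exists>i j t p mk'. i < qq k l m \<and> j < k m \<and> t < l m - 1 \<and> mk = mk' @ [j]
       \<and> P = offs k l m i j t + p \<and> circ_occ k l W n m (chunks k m w ! j) p mk'"
  then obtain i j t p mk' where h: "i < qq k l m" "j < k m" "t < l m - 1" "mk = mk' @ [j]"
     "P = offs k l m i j t + p" "circ_occ k l W n m (chunks k m w ! j) p mk'" by blast
  define ws where "ws = chunks k m w"
  have c: "w = concat ws" "length ws = k m" "set ws \<subseteq> W m"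
    using chunks_W[OF assms(2,3)] ws_def by auto
  have "circ_occ k l W n (Suc m) w
               (length (concat (take (i * k m + j) (cblocks k l m (map (cmap k l m) ws))))
                 + (qq k l m - jidx k l m i) + t * length (cmap k l m (ws ! j)) + p)
               (mk' @ [j])"
    by (rule circ_occ.step[where ws=ws, OF assms(3) c h(1,2,3) h(6)[folded ws_def]])
  thus "circ_occ k l W n (Suc m) w P mk"
    unfolding circ_step_val[OF assms(1,2) c(2,3) h(1,2)] using h(4,5) by simp
qed

lemma circ_count: assumes "circ_coeff_seq k l" "odometer_construction_seq k Alph W" "n \<le> m"
  shows "\<forall>w\<in>W m. \<forall>S. S \<subseteq> genetic_markers k n m \<longrightarrow>
    card {pos. \<exists>mk\<in>S. circ_occ k l W n m w pos mk} = card S * (\<Prod>p\<in>{n..<m}. qq k l p * (l p - 1))"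
  using assms(3)
proof (induction m rule: dec_induct)
  case base
  show ?case
  proof (intro ballI allI impI)
    fix w S assume w: "w \<in> W n" and S: "S \<subseteq> genetic_markers k n n"
    have "{pos. \<exists>mk\<in>S. circ_occ k l W n n w pos mk} = (if [] \<in> S then {0} else {})"
      using w by (auto dest: circ_base intro: circ_occ.base)
    moreover have "S = (if [] \<in> S then {[]} else {})" using S markers_base by auto
    ultimately show "card {pos. \<exists>mk\<in>S. circ_occ k l W n n w pos mk} = card S * (\<Prod>p\<in>{n..<n}. qq k l p * (l p - 1))"
      by (cases "[] \<in> S") auto
  qed
next
  case (step m)
  show ?case
  proof (intro ballI allI impI)
    fix w S assume w: "w \<in> W (Suc m)" and S: "S \<subseteq> genetic_markers k n (Suc m)"
    define PP where "PP = (\<Prod>p\<in>{n..<m}. qq k l p * (l p - 1))"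
    define Sj where "Sj j = {x. x @ [j] \<in> S}" for j
    define Pj where "Pj j = {pos. \<exists>mk\<in>Sj j. circ_occ k l W n m (chunks k m w ! j) pos mk}" for j
    let ?D = "{..<qq k l m} \<times> ({..<l m - 1} \<times> (SIGMA j:{..<k m}. Pj j))"
    let ?F = "\<lambda>(i,t,j,p). offs k l m i j t + p"
    have cw: "w = concat (chunks k m w) \<and> length (chunks k m w) = k m \<and> set (chunks k m w) \<subseteq> W m"
      using chunks_W[OF assms(2) w] .
    have inW: "j < k m \<Longrightarrow> chunks k m w ! j \<in> W m" for j using cw by auto
    have Pjc: "j < k m \<Longrightarrow> card (Pj j) = card (Sj j) * PP" for j
      using step.IH inW markers_split_sub[OF S step.hyps(1)] unfolding Pj_def Sj_def PP_def by blast
    have Pjb: "p \<in> Pj j \<Longrightarrow> p < qq k l m" for p j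
      unfolding Pj_def using circ_bound[OF assms(1,2)] by blast
    have Pjf: "finite (Pj j)" for j
      using Pjb by (meson finite_lessThan finite_subset lessThan_iff subsetI)
    have eq: "{pos. \<exists>mk\<in>S. circ_occ k l W n (Suc m) w pos mk} = ?F ` ?D"
    proof (rule set_eqI, rule iffI)
      fix pos :: nat assume "pos \<in> {pos. \<exists>mk\<in>S. circ_occ k l W n (Suc m) w pos mk}"
      then obtain mk where mk: "mk \<in> S" "circ_occ k l W n (Suc m) w pos mk" by blast
      then obtain i j t p mk' where h: "i < qq k l m" "j < k m" "t < l m - 1" "mk = mk' @ [j]"
        "pos = offs k l m i j t + p" "circ_occ k l W n m (chunks k m w ! j) p mk'"
        using circ_step_iff[OF assms(1,2) w step.hyps(1)] by blast
      hence "(i,t,j,p) \<in> ?D" using mk(1) unfolding Pj_def Sj_def by auto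
      moreover have "pos = ?F (i,t,j,p)" using h(5) by simp
      ultimately show "pos \<in> ?F ` ?D" by blast
    next
      fix x assume "x \<in> ?F ` ?D"
      then obtain i t j p where jp: "(i,t,j,p) \<in> ?D" "x = offs k l m i j t + p" by auto
      then obtain mk' where h: "i < qq k l m" "t < l m - 1" "j < k m" "mk' @ [j] \<in> S"
          "circ_occ k l W n m (chunks k m w ! j) p mk'"
        unfolding Pj_def Sj_def by auto
      hence "circ_occ k l W n (Suc m) w x (mk' @ [j])"
        by (subst circ_step_iff[OF assms(1,2) w step.hyps(1)]) (use jp(2) in blast)
      thus "x \<in> {pos. \<exists>mk\<in>S. circ_occ k l W n (Suc m) w pos mk}" using h by auto
    qed
    have inj: "inj_on ?F ?D"
    proof (rule inj_onI)
      fix x y assume xy: "x \<in> ?D" "y \<in> ?D" "?F x = ?F y"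
      obtain i t j p where x: "x = (i,t,j,p)" by (metis prod.exhaust)
      obtain i' t' j' p' where y: "y = (i',t',j',p')" by (metis prod.exhaust)
      have h: "i < qq k l m" "t < l m - 1" "j < k m" "p < qq k l m"
        "i' < qq k l m" "t' < l m - 1" "j' < k m" "p' < qq k l m"
        using xy(1,2) x y Pjb by auto
      moreover have "offs k l m i j t + p = offs k l m i' j' t' + p'" using xy(3) x y by simp
      ultimately show "x = y" using offs_inj[OF assms(1)] x y by metis
    qed
    have "card (?F ` ?D) = card ?D" using inj by (rule card_image)
    also have "\<dots> = qq k l m * ((l m - 1) * (\<Sum>j<k m. card (Pj j)))"
      using Pjf by (simp add: card_cartesian_product)
    also have "(\<Sum>j<k m. card (Pj j)) = (\<Sum>j<k m. card (Sj j)) * PP"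
      using Pjc by (simp add: sum_distrib_right)
    also have "(\<Sum>j<k m. card (Sj j)) = card S"
      using markers_split_card[OF S step.hyps(1)] unfolding Sj_def by simp
    also have "qq k l m * ((l m - 1) * (card S * PP)) = card S * (\<Prod>p\<in>{n..<Suc m}. qq k l p * (l p - 1))"
      using step.hyps(1) by (simp add: PP_def prod.atLeastLessThan_Suc mult_ac)
    finally show "card {pos. \<exists>mk\<in>S. circ_occ k l W n (Suc m) w pos mk} =
        card S * (\<Prod>p\<in>{n..<Suc m}. qq k l p * (l p - 1))" using eq by simp
  qed
qed




lemma KK_split: "n \<le> m \<Longrightarrow> KK k m = KK k n * (\<Prod>i\<in>{n..<m}. k i)"
  by (induction m rule: dec_induct) (auto simp: KK_Suc prod.atLeastLessThan_Suc mult_ac)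

lemma qq_split: "n \<le> m \<Longrightarrow> qq k l m = qq k l n * (\<Prod>p\<in>{n..<m}. k p * l p * qq k l p)"
  by (induction m rule: dec_induct) (auto simp: prod.atLeastLessThan_Suc power2_eq_square mult_ac)

theorem mainTheorem13:
  fixes k l :: "nat \<Rightarrow> nat" and Alph :: "'a set" and W :: "nat \<Rightarrow> 'a list set"
    and n m :: nat and w :: "'a list" and S :: "nat list set"
  assumes "circ_coeff_seq k l"
    and "odometer_construction_seq k Alph W"
    and "n \<le> m" and "w \<in> W m"
    and "S \<subseteq> genetic_markers k n m"
  defines "d \<equiv> real (card S) / real (\<Prod>i\<in>{n..<m}. k i)"
    and "A \<equiv> {pos. \<exists>mk\<in>S. odo_occ k W n m w pos mk}"
    and "Ac \<equiv> {pos. \<exists>mk\<in>S. circ_occ k l W n m w pos mk}"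
  shows "real (card A) / real (KK k m) = d / real (KK k n)
    \<and> real (card Ac) / real (qq k l m)
        = d / real (qq k l n) * (\<Prod>p\<in>{n..<m}. 1 - 1 / real (l p))
    \<and> real (card Ac) / real (qq k l m)
        = real (card A) / real (KK k m) * (\<Prod>p\<in>{n..<m}. 1 - 1 / real (l p))
          * real (KK k n) / real (qq k l n)"
proof -
  have cA: "card A = card S" unfolding A_def using odo_count[OF assms(1,2,3)] assms(4,5) by blast
  have cAc: "card Ac = card S * (\<Prod>p\<in>{n..<m}. qq k l p * (l p - 1))"
    unfolding Ac_def using circ_count[OF assms(1,2,3)] assms(4,5) by blast
  define G where "G = (\<Prod>i\<in>{n..<m}. real (k i))"
  define Q where "Q = (\<Prod>i\<in>{n..<m}. real (qq k l i))"
  define L where "L = (\<Prod>i\<in>{n..<m}. real (l i))"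
  define Lm where "Lm = (\<Prod>i\<in>{n..<m}. real (l i) - 1)"
  have kp: "\<And>i. real (k i) > 0" using k_pos[OF assms(1)] by (metis of_nat_0_less_iff not_numeral_le_zero not_gr0)
  have lp: "\<And>i. real (l i) > 0" using l_pos[OF assms(1)] by (metis of_nat_0_less_iff not_one_le_zero not_gr0)
  have qp: "\<And>i. real (qq k l i) > 0" using qq_pos[OF assms(1)] by simp
  have G0: "G > 0" unfolding G_def using kp by (simp add: prod_pos)
  have Q0: "Q > 0" unfolding Q_def using qp by (simp add: prod_pos)
  have L0: "L > 0" unfolding L_def using lp by (simp add: prod_pos)
  have KKn: "real (KK k n) > 0" using KK_pos[OF assms(1)] by simp
  have qn: "real (qq k l n) > 0" using qp by simp
  have d: "d = real (card S) / G" unfolding d_def G_def by simp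
  have KKm: "real (KK k m) = real (KK k n) * G"
    unfolding G_def using KK_split[OF assms(3), of k] by simp
  have qqm: "real (qq k l m) = real (qq k l n) * (G * L * Q)"
    unfolding G_def L_def Q_def using qq_split[OF assms(3), of k l] by (simp add: prod.distrib)
  have lm1: "\<And>i. real (l i - 1) = real (l i) - 1" using l_pos[OF assms(1)] by (simp add: of_nat_diff)
  have el: "real (qq k l x * (l x - 1)) = real (qq k l x) * (real (l x) - 1)" for x
    using lm1[of x] by simp
  have "(\<Prod>x\<in>{n..<m}. real (qq k l x * (l x - 1))) = (\<Prod>x\<in>{n..<m}. real (qq k l x) * (real (l x) - 1))"
    by (rule prod.cong[OF refl], rule el)
  also have "\<dots> = Q * Lm" unfolding Q_def Lm_def by (rule prod.distrib)
  finally have "real (\<Prod>x\<in>{n..<m}. qq k l x * (l x - 1)) = Q * Lm"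
    by (simp only: of_nat_prod)
  hence cAc': "real (card Ac) = real (card S) * (Q * Lm)"
    unfolding cAc by simp
  have pr: "(\<Prod>p\<in>{n..<m}. 1 - 1 / real (l p)) = Lm / L"
  proof -
    have "(\<Prod>p\<in>{n..<m}. 1 - 1 / real (l p)) = (\<Prod>p\<in>{n..<m}. (real (l p) - 1) / real (l p))"
      using lp by (intro prod.cong) (auto simp: field_simps)
    thus ?thesis unfolding Lm_def L_def by (simp add: prod_dividef)
  qed
  have e1: "real (card A) / real (KK k m) = d / real (KK k n)"
    unfolding cA d KKm using G0 KKn by (simp add: field_simps)
  have e2: "real (card Ac) / real (qq k l m) = d / real (qq k l n) * (\<Prod>p\<in>{n..<m}. 1 - 1 / real (l p))"
    unfolding cAc' qqm d pr using G0 Q0 L0 qn by (simp add: field_simps)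
  have e3: "real (card Ac) / real (qq k l m)
        = real (card A) / real (KK k m) * (\<Prod>p\<in>{n..<m}. 1 - 1 / real (l p))
          * real (KK k n) / real (qq k l n)"
    unfolding e2 e1 using KKn by (simp add: field_simps)
  show ?thesis using e1 e2 e3 by blast
qed


end
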